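(* Let $N^h\ge 2$ be an integer and $h=1/N^h$. Let $\lambda_j=j^2\pi^2$ be the $j$-th exact eigenvalue of $-u''=\lambda u$ on $(0,1)$ with $u(0)=u(1)=0$, and let $\lambda^h_{gs,j}$ be the $j$-th approximate eigenvalue (eigenvalues sorted in nondecreasing order, counting multiplicity) of the linear GSFEM generalized matrix eigenvalue problem $(\mathbf{K}-\eta_K\mathbf{S})\mathbf{U}=\lambda^h(\mathbf{M}+\eta_M\mathbf{S}_g)\mathbf{U}$ described in the context, with $\eta_K=\frac{1}{12}$ and $\eta_M=\frac{1}{360}$. Then \[ \frac{|\lambda^h_{gs,j}-\lambda_j|}{\lambda_j}<\frac{1}{3024}(j\pi h)^6\qquad\text{for all } j\in\{1,\dots,N^h-1\}. \]
   Context: Setting (linear finite elements, generalized SoftFEM, in 1D): Let $x_k=kh$, $k=0,\dots,N^h$, be a uniform mesh of $[0,1]$. Let $V^h$ be the space of continuous functions on $[0,1]$ that are affine on each $[x_{k-1},x_k]$ and vanish at $0$ and $1$, with hat basis $\phi_k$, $k=1,\dots,N^h-1$, $\phi_k(x_l)=\delta_{kl}$. For $v\in V^h$ and an interior node $x_k$ let $[\![v']\!](x_k)=v'(x_k^-)-v'(x_k^+)$. Define $a(v,w)=\int_0^1 v'w'\,dx$, $b(v,w)=\int_0^1 vw\,dx$, $s(v,w)=\sum_{k=1}^{N^h-1} h\,[\![v']\!](x_k)[\![w']\!](x_k)$, $s_g(v,w)=\sum_{k=1}^{N^h-1} h^3\,[\![v']\!](x_k)[\![w']\!](x_k)$, and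 the matrices $\mathbf{K}_{kl}=a(\phi_l,\phi_k)$, $\mathbf{M}_{kl}=b(\phi_l,\phi_k)$, $\mathbf{S}_{kl}=s(\phi_l,\phi_k)$, $(\mathbf{S}_g)_{kl}=s_g(\phi_l,\phi_k)$. Explicitly, $\mathbf{K}=\frac1h\,\mathrm{tridiag}(-1,2,-1)$, $\mathbf{M}=h\,\mathrm{tridiag}(\tfrac16,\tfrac23,\tfrac16)$, $\mathbf{S}=\frac1h$ times the symmetric pentadiagonal matrix with rows $(1,-4,6,-4,1)$ except that the first and last diagonal entries are $5$, and $\mathbf{S}_g=h^2\mathbf{S}$; all are $(N^h-1)\times(N^h-1)$. *)

theory Defs
  imports Complex_Main "Jordan_Normal_Form.Determinant" "HOL-Computational_Algebra.Polynomial"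
    "HOL-Library.Multiset"
begin

text \<open>Uniform mesh with N cells, h = 1/N, interior nodes x_1..x_(N-1).
  Matrices are (N-1)x(N-1); matrix row/column index i (0-based) corresponds to node i+1.\<close>

definition mesh_h :: "nat \<Rightarrow> real" where
  "mesh_h N = 1 / real N"

definition stiff_mat :: "nat \<Rightarrow> real mat" where
  "stiff_mat N = mat (N - 1) (N - 1) (\<lambda>(i, j).
     (1 / mesh_h N) * (if i = j then 2 else if i = j + 1 \<or> j = i + 1 then -1 else 0))"

definition mass_mat :: "nat \<Rightarrow> real mat" where
  "mass_mat N = mat (N - 1) (N - 1) (\<lambda>(i, j).
     mesh_h N * (if i = j then 2/3 else if i = j + 1 \<or> j = i + 1 then 1/6 else 0))"

text \<open>Jump of the derivative of the hat function phi_k at the node x_m: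
  [[phi_k']](x_m) = phi_k'(x_m^-) - phi_k'(x_m^+).\<close>
definition hat_jump :: "nat \<Rightarrow> nat \<Rightarrow> nat \<Rightarrow> real" where
  "hat_jump N k m = (if m = k then 2 / mesh_h N
                     else if m + 1 = k \<or> k + 1 = m then - 1 / mesh_h N else 0)"

definition jump_mat :: "nat \<Rightarrow> real mat" where
  "jump_mat N = mat (N - 1) (N - 1) (\<lambda>(i, j).
     (\<Sum>m = 1..N - 1. mesh_h N * hat_jump N (j + 1) m * hat_jump N (i + 1) m))"

text \<open>S_g = h^2 S (the h^3-weighted jump form).\<close>
definition jump_mat_g :: "nat \<Rightarrow> real mat" where
  "jump_mat_g N = (mesh_h N)\<^sup>2 \<cdot>\<^sub>m jump_mat N"

definition gen_char_poly :: "real mat \<Rightarrow> real mat \<Rightarrow> real poly" where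
  "gen_char_poly A B = det (mat (dim_row A) (dim_col A) (\<lambda>ij. [: A $$ ij, - (B $$ ij) :]))"

text \<open>j-th (1-based) generalized eigenvalue, sorted nondecreasingly, counted with multiplicity.\<close>
definition gen_eig :: "real mat \<Rightarrow> real mat \<Rightarrow> nat \<Rightarrow> real" where
  "gen_eig A B j = sorted_list_of_multiset (proots (gen_char_poly A B)) ! (j - 1)"

definition gsfem_eig :: "nat \<Rightarrow> real \<Rightarrow> real \<Rightarrow> nat \<Rightarrow> real" where
  "gsfem_eig N etaK etaM j =
     gen_eig (stiff_mat N - etaK \<cdot>\<^sub>m jump_mat N) (mass_mat N + etaM \<cdot>\<^sub>m jump_mat_g N) j"

end

theory Submission
  imports Defs
begin

fun peval :: "real list \<Rightarrow> real \<Rightarrow> real" where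
  "peval [] x = 0" | "peval (c # cs) x = c + x * peval cs x"

fun padd :: "real list \<Rightarrow> real list \<Rightarrow> real list" where
  "padd [] ys = ys" | "padd xs [] = xs" | "padd (x # xs) (y # ys) = (x + y) # padd xs ys"

lemma peval_padd: "peval (padd xs ys) x = peval xs x + peval ys x"
  by (induction xs ys rule: padd.induct) (auto simp: algebra_simps)

lemma peval_map_mult: "peval (map ((*) a) xs) x = a * peval xs x"
  by (induction xs) (auto simp: algebra_simps)

fun pshift :: "real list \<Rightarrow> real \<Rightarrow> real list" where
  "pshift [] a = []"
| "pshift (c # cs) a = (let S = pshift cs a in padd [c] (padd (map ((*) a) S) (0 # S)))"

lemma peval_pshift: "peval (pshift cs a) u = peval cs (a + u)"
  by (induction cs) (auto simp: Let_def peval_padd peval_map_mult algebra_simps)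

fun hint :: "real list \<Rightarrow> real \<Rightarrow> real \<Rightarrow> real \<times> real" where
  "hint [] a b = (0, 0)"
| "hint (c # cs) a b = (case hint cs a b of (l, u) \<Rightarrow>
     (c + (if l \<ge> 0 then a * l else b * l), c + (if u \<ge> 0 then b * u else a * u)))"

lemma hint_sound:
  assumes "0 \<le> a" "a \<le> x" "x \<le> b"
  shows "fst (hint cs a b) \<le> peval cs x \<and> peval cs x \<le> snd (hint cs a b)"
proof (induction cs)
  case Nil then show ?case by simp
next
  case (Cons c cs)
  obtain l u where lu: "hint cs a b = (l, u)" by (cases "hint cs a b")
  with Cons have *: "l \<le> peval cs x" "peval cs x \<le> u" by auto
  have "(if l \<ge> 0 then a * l else b * l) \<le> x * peval cs x"
  proof (cases "l \<ge> 0")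
    case True
    then show ?thesis using * assms by (simp add: mult_mono)
  next
    case False
    then have "b * l \<le> x * l" using assms by (simp add: mult_right_mono_neg)
    also have "\<dots> \<le> x * peval cs x" using * assms by (simp add: mult_left_mono)
    finally show ?thesis using False by simp
  qed
  moreover have "x * peval cs x \<le> (if u \<ge> 0 then b * u else a * u)"
  proof (cases "u \<ge> 0")
    case True
    have "x * peval cs x \<le> x * u" using * assms by (simp add: mult_left_mono)
    also have "\<dots> \<le> b * u" using True assms by (simp add: mult_right_mono)
    finally show ?thesis using True by simp
  next
    case False
    have "x * peval cs x \<le> x * u" using * assms by (simp add: mult_left_mono)
    also have "\<dots> \<le> a * u" using False assms by (simp add: mult_right_mono_neg)
    finally show ?thesis using False by simp
  qed
  ultimately show ?case by (simp add: lu)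
qed

lemma peval_pos_check:
  assumes "fst (hint (pshift cs a) 0 w) > 0" "a \<le> x" "x \<le> a + w"
  shows "peval cs x > 0"
proof -
  have "fst (hint (pshift cs a) 0 w) \<le> peval (pshift cs a) (x - a)"
    using hint_sound[of 0 "x - a" w] assms by auto
  then show ?thesis using assms(1) by (simp add: peval_pshift)
qed

definition QH :: "real list" where "QH = [(1/6048), - (1/226800), - (1/4276800), (11/653184000), - (479/804722688000), (71/6584094720000), - (1/10346434560000), (1/13036507545600000), (1/70237510041600000), (1/20649827952230400000)]"
definition QG :: "real list" where "QG = [(1/6048), - (23/453600), (229/39916800), - (211/653184000), (11863/804722688000), - (3671/6584094720000), (1747/108637562880000), - (137/395045683200000), (45961/8030488648089600000), - (3449/48182931888537600000), (13/19711199408947200000), - (1/236534392907366400000), (1/62445079727544729600000)]"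

lemma QG_pos: "0 \<le> x \<Longrightarrow> x \<le> 10 \<Longrightarrow> peval QG x > 0"
proof -
  assume x: "0 \<le> x" "x \<le> 10"
  have c1: "fst (hint (pshift QG 0) 0 (5/2)) > 0" by (simp add: QG_def Let_def)
  have c2: "fst (hint (pshift QG (5/2)) 0 (5/2)) > 0" by (simp add: QG_def Let_def)
  have c3: "fst (hint (pshift QG 5) 0 (5/4)) > 0" by (simp add: QG_def Let_def)
  have c4: "fst (hint (pshift QG (25/4)) 0 (5/4)) > 0" by (simp add: QG_def Let_def)
  have c5: "fst (hint (pshift QG (15/2)) 0 (5/2)) > 0" by (simp add: QG_def Let_def)
  show ?thesis
    using peval_pos_check[OF c1, of x] peval_pos_check[OF c2, of x] peval_pos_check[OF c3, of x]
      peval_pos_check[OF c4, of x] peval_pos_check[OF c5, of x] x by linarith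
qed

lemma QH_pos: "0 \<le> x \<Longrightarrow> x \<le> 10 \<Longrightarrow> peval QH x > 0"
proof -
  assume x: "0 \<le> x" "x \<le> 10"
  have c1: "fst (hint (pshift QH 0) 0 10) > 0" by (simp add: QH_def Let_def)
  show ?thesis
    using peval_pos_check[OF c1, of x] x by linarith
qed

definition Cx :: "real \<Rightarrow> real" where
  "Cx x = 1 - x/2 + x^2/24 - x^3/720 + x^4/40320 - x^5/3628800"
definition ex :: "real \<Rightarrow> real" where "ex x = x^6/479001600"
definition Nf :: "real \<Rightarrow> real" where "Nf m = m - m^2/12"
definition Df :: "real \<Rightarrow> real" where "Df m = 1 - m/6 + m^2/360"

fun pmul :: "real list \<Rightarrow> real list \<Rightarrow> real list" where
  "pmul [] ys = []"
| "pmul (c # cs) ys = padd (map ((*) c) ys) (0 # pmul cs ys)"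

lemma peval_pmul: "peval (pmul xs ys) x = peval xs x * peval ys x"
  by (induction xs) (auto simp: peval_padd peval_map_mult algebra_simps)

definition pN :: "real list \<Rightarrow> real list" where
  "pN m = padd m (map ((*) (-1/12)) (pmul m m))"
definition pD :: "real list \<Rightarrow> real list" where
  "pD m = padd [1] (padd (map ((*) (-1/6)) m) (map ((*) (1/360)) (pmul m m)))"

lemma peval_pN: "peval (pN m) x = Nf (peval m x)"
  by (simp add: pN_def Nf_def peval_padd peval_map_mult peval_pmul power2_eq_square)
lemma peval_pD: "peval (pD m) x = Df (peval m x)"
  by (simp add: pD_def Df_def peval_padd peval_map_mult peval_pmul power2_eq_square)

definition Lm :: "real list" where
  "Lm = [0, 1, -1/12, 1/360, -1/20160, 1/1814400, -1/239500800]"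
definition Um :: "real list" where
  "Um = [0, 1, -1/12, 1/360, -1/20160, 1/1814400, 1/239500800]"

lemma peval_x4: "peval (0 # 0 # 0 # 0 # q) x = x^4 * peval q x"
  by (simp add: eval_nat_numeral algebra_simps)

lemma Lm_eq: "2 - 2*(Cx x + ex x) = peval Lm x"
  by (simp add: Lm_def Cx_def ex_def eval_nat_numeral algebra_simps)
lemma Um_eq: "2 - 2*(Cx x - ex x) = peval Um x"
  by (simp add: Um_def Cx_def ex_def eval_nat_numeral algebra_simps)

lemma G_list: "padd (pN Lm) (map ((*) (-1)) (pmul [0, 1, 0, 0, -1/3024] (pD Lm))) = 0 # 0 # 0 # 0 # QG"
  by (simp add: pN_def pD_def Lm_def QG_def)

lemma H_list: "padd (pmul [0, 1] (pD Um)) (map ((*) (-1)) (pN Um)) = 0 # 0 # 0 # 0 # QH"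
  by (simp add: pN_def pD_def Um_def QH_def)

lemma G_ident: "Nf (2 - 2*(Cx x + ex x)) - (x - x^4/3024) * Df (2 - 2*(Cx x + ex x)) = x^4 * peval QG x"
proof -
  have "peval (padd (pN Lm) (map ((*) (-1)) (pmul [0, 1, 0, 0, -1/3024] (pD Lm)))) x
      = Nf (peval Lm x) - (x - x^4/3024) * Df (peval Lm x)"
    by (simp add: peval_padd peval_map_mult peval_pmul peval_pN peval_pD eval_nat_numeral algebra_simps)
  then show ?thesis unfolding G_list peval_x4 Lm_eq by simp
qed

lemma H_ident: "x * Df (2 - 2*(Cx x - ex x)) - Nf (2 - 2*(Cx x - ex x)) = x^4 * peval QH x"
proof -
  have "peval (padd (pmul [0, 1] (pD Um)) (map ((*) (-1)) (pN Um))) x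
      = x * Df (peval Um x) - Nf (peval Um x)"
    by (simp add: peval_padd peval_map_mult peval_pmul peval_pN peval_pD algebra_simps)
  then show ?thesis unfolding H_list peval_x4 Um_eq by simp
qed

lemma cos_taylor: "\<bar>cos t - Cx (t^2)\<bar> \<le> ex (t^2)"
proof -
  obtain s where s: "cos t = (\<Sum>m<12. cos_coeff m * t^m) + cos (s + 1/2 * real 12 * pi) / fact 12 * t^12"
    using Maclaurin_cos_expansion[of t 12] by blast
  have sum0: "(\<Sum>m<12. cos_coeff m * t^m) = 1 - t^2/2 + t^4/24 - t^6/720 + t^8/40320 - t^10/3628800"
    by (simp add: lessThan_nat_numeral cos_coeff_def fact_numeral)
  have sum: "(\<Sum>m<12. cos_coeff m * t^m) = Cx (t^2)"
    unfolding sum0 Cx_def by (simp add: power_mult[symmetric])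
  have f: "(fact 12 :: real) = 479001600" by (simp add: fact_numeral)
  have "\<bar>cos (s + 1/2 * real 12 * pi)\<bar> * t^12 \<le> 1 * t^12"
    by (intro mult_right_mono) auto
  then have "\<bar>cos (s + 1/2 * real 12 * pi) / fact 12 * t^12\<bar> \<le> t^12 / 479001600"
    by (simp add: abs_mult f power_abs)
  moreover have "ex (t^2) = t^12 / 479001600" by (simp add: ex_def power_mult[symmetric])
  moreover have "cos t - Cx (t^2) = cos (s + 1/2 * real 12 * pi) / fact 12 * t^12"
    using s sum by linarith
  ultimately show ?thesis by linarith
qed
lemma est:
  fixes t :: real
  assumes t0: "0 < t" and tx: "t^2 \<le> 10"
  shows "Df (2 - 2*cos t) > 0" "t^2 - t^8/3024 < Nf (2 - 2*cos t) / Df (2 - 2*cos t)"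
    "Nf (2 - 2*cos t) / Df (2 - 2*cos t) < t^2"
proof -
  define x where "x = t^2"
  define m where "m = 2 - 2*cos t"
  have x0: "0 < x" using t0 by (simp add: x_def)
  have x10: "x \<le> 10" using tx by (simp add: x_def)
  have t8: "t^8 = x^4" by (simp add: x_def power_mult[symmetric])
  have cb: "\<bar>cos t - Cx x\<bar> \<le> ex x" using cos_taylor[of t] by (simp add: x_def)
  have "x^6 \<le> 10^6" using x0 x10 by (intro power_mono) auto
  then have e1: "ex x \<le> 1" by (simp add: ex_def)
  have e0: "0 \<le> ex x" using x0 by (simp add: ex_def)
  have m0: "0 \<le> m" "m \<le> 4" unfolding m_def using cos_le_one[of t] cos_ge_minus_one[of t] by linarith+
  define l where "l = 2 - 2*(Cx x + ex x)"
  define u where "u = 2 - 2*(Cx x - ex x)"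
  have cb1: "cos t - Cx x \<le> ex x" "Cx x - cos t \<le> ex x" using cb by (auto simp: abs_le_iff)
  have lm: "l \<le> m" "m \<le> u" "u \<le> 8" using cb1 e0 e1 m0 by (auto simp: l_def u_def m_def)
  have l4: "m + l \<le> 8" using lm m0 by linarith
  have u12: "m + u \<le> 12" using lm m0 by linarith
  have D: "Df m > 0"
  proof -
    have "0 \<le> m^2/360" by simp
    then show ?thesis using m0 unfolding Df_def by linarith
  qed
  show "Df (2 - 2*cos t) > 0" using D by (simp only: m_def)
  have idU: "(x * Df m - Nf m) - (x * Df u - Nf u) = (m - u) * ((- x/6 - 1) + (x/360 + 1/12) * (m + u))"
    unfolding Df_def Nf_def power2_eq_square by (simp add: algebra_simps add_divide_distrib[symmetric] diff_divide_distrib[symmetric])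
  have "(x/360 + 1/12) * (m + u) \<le> (x/360 + 1/12) * 12"
    using u12 x0 by (intro mult_left_mono) auto
  then have "(- x/6 - 1) + (x/360 + 1/12) * (m + u) \<le> (- x/6 - 1) + (x/360 + 1/12) * 12"
    by (rule add_left_mono)
  also have "\<dots> \<le> 0" using x0 by simp
  finally have "(- x/6 - 1) + (x/360 + 1/12) * (m + u) \<le> 0" .
  then have "0 \<le> (m - u) * ((- x/6 - 1) + (x/360 + 1/12) * (m + u))"
    using lm by (intro mult_nonpos_nonpos) auto
  moreover have "x * Df u - Nf u = x^4 * peval QH x" using H_ident[of x] by (simp only: u_def)
  moreover have "x^4 * peval QH x > 0" using QH_pos[of x] x0 x10 by simp
  ultimately have "Nf m < x * Df m" using idU by linarith
  then have "Nf m / Df m < x" using D by (simp add: divide_less_eq)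
  then show "Nf (2 - 2*cos t) / Df (2 - 2*cos t) < t^2"
    by (simp only: m_def x_def)
  define T where "T = x - x^4/3024"
  have "x^3 \<le> 10^3" using x0 x10 by (intro power_mono) auto
  then have "x * x^3 \<le> x * 3024" using x0 by (intro mult_left_mono) auto
  then have "x^4 \<le> x * 3024" by (simp add: power_Suc[symmetric] del: power_Suc)
  then have T0: "0 \<le> T" unfolding T_def by linarith
  have idL: "(Nf m - T * Df m) - (Nf l - T * Df l) = (m - l) * ((1 + T/6) - (1/12 + T/360) * (m + l))"
    unfolding Df_def Nf_def power2_eq_square by (simp add: algebra_simps add_divide_distrib[symmetric] diff_divide_distrib[symmetric])
  have "(1/12 + T/360) * (m + l) \<le> (1/12 + T/360) * 8"
    using l4 T0 by (intro mult_left_mono) auto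
  then have "(1 + T/6) - (1/12 + T/360) * 8 \<le> (1 + T/6) - (1/12 + T/360) * (m + l)"
    by (rule diff_left_mono)
  moreover have "0 \<le> (1 + T/6) - (1/12 + T/360) * 8" using T0 by simp
  ultimately have "(1 + T/6) - (1/12 + T/360) * (m + l) \<ge> 0" by linarith
  then have "0 \<le> (m - l) * ((1 + T/6) - (1/12 + T/360) * (m + l))"
    using lm by (intro mult_nonneg_nonneg) auto
  moreover have "Nf l - T * Df l = x^4 * peval QG x" using G_ident[of x] by (simp only: l_def T_def)
  moreover have "x^4 * peval QG x > 0" using QG_pos[of x] x0 x10 by simp
  ultimately have "T * Df m < Nf m" using idL by linarith
  then have "T < Nf m / Df m" using D by (simp add: less_divide_eq)
  then show "t^2 - t^8/3024 < Nf (2 - 2*cos t) / Df (2 - 2*cos t)"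
    by (simp only: m_def x_def T_def t8)
qed

definition tri :: "real \<Rightarrow> real \<Rightarrow> nat \<Rightarrow> nat \<Rightarrow> real" where
  "tri \<alpha> \<beta> i k = (if i = k then \<alpha> else if i = k + 1 \<or> k = i + 1 then \<beta> else 0)"

lemma tri_sym: "tri \<alpha> \<beta> i k = tri \<alpha> \<beta> k i"
  by (auto simp: tri_def)

lemma tri_sum:
  assumes i: "i < n" and z: "sin (real (Suc n) * \<theta>) = 0"
  shows "(\<Sum>k = 0..<n. tri \<alpha> \<beta> i k * sin (real (Suc k) * \<theta>))
         = (\<alpha> + 2 * \<beta> * cos \<theta>) * sin (real (Suc i) * \<theta>)"
proof -
  define s where "s = (\<lambda>k::nat. sin (real k * \<theta>))"
  have split: "tri \<alpha> \<beta> i k * s (Suc k) = (if k = i then \<alpha> * s (Suc k) else 0)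
      + (if k + 1 = i then \<beta> * s (Suc k) else 0) + (if k = i + 1 then \<beta> * s (Suc k) else 0)" for k
    by (auto simp: tri_def)
  have A: "(\<Sum>k = 0..<n. if k = i then \<alpha> * s (Suc k) else 0) = \<alpha> * s (Suc i)"
    using i by simp
  have B: "(\<Sum>k = 0..<n. if k + 1 = i then \<beta> * s (Suc k) else 0) = \<beta> * s i"
  proof (cases i)
    case 0 then show ?thesis by (simp add: s_def)
  next
    case (Suc i')
    then have "(\<Sum>k = 0..<n. if k + 1 = i then \<beta> * s (Suc k) else 0)
        = (\<Sum>k = 0..<n. if k = i' then \<beta> * s (Suc k) else 0)" by (intro sum.cong) auto
    also have "\<dots> = \<beta> * s i" using i Suc by simp
    finally show ?thesis .
  qed
  have C: "(\<Sum>k = 0..<n. if k = i + 1 then \<beta> * s (Suc k) else 0) = \<beta> * s (i + 2)"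
  proof (cases "i + 1 < n")
    case True then show ?thesis by simp
  next
    case False
    then have "i + 2 = Suc n" using i by simp
    then show ?thesis using False z by (simp add: s_def)
  qed
  have trig: "s i + s (i + 2) = 2 * cos \<theta> * s (Suc i)"
  proof -
    have "s i = sin (real (Suc i) * \<theta> - \<theta>)" by (simp add: s_def algebra_simps)
    moreover have "s (i + 2) = sin (real (Suc i) * \<theta> + \<theta>)" by (simp add: s_def algebra_simps)
    ultimately show ?thesis by (simp add: sin_add sin_diff s_def)
  qed
  have "(\<Sum>k = 0..<n. tri \<alpha> \<beta> i k * s (Suc k)) = \<alpha> * s (Suc i) + \<beta> * s i + \<beta> * s (i + 2)"
    unfolding split sum.distrib A B C ..
  also have "\<dots> = \<alpha> * s (Suc i) + \<beta> * (s i + s (i + 2))" by (simp add: algebra_simps)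
  also have "\<dots> = (\<alpha> + 2 * \<beta> * cos \<theta>) * s (Suc i)" unfolding trig by (simp add: algebra_simps)
  finally show ?thesis by (simp add: s_def)
qed


definition th :: "nat \<Rightarrow> nat \<Rightarrow> real" where "th N c = real (Suc c) * pi / real N"
definition Qm :: "nat \<Rightarrow> real mat" where
  "Qm N = mat (N - 1) (N - 1) (\<lambda>(k, c). sin (real (Suc k) * th N c))"
definition mu :: "nat \<Rightarrow> nat \<Rightarrow> real" where "mu N c = 2 - 2 * cos (th N c)"

lemma th_zero: assumes "N \<ge> 1" shows "sin (real (Suc (N - 1)) * th N c) = 0"
proof -
  have "real (Suc (N - 1)) * th N c = real (Suc c) * pi"
    using assms by (simp add: th_def of_nat_diff)
  then show ?thesis by (simp only: sin_npi)
qed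

lemma Qm_idx: "k < N - 1 \<Longrightarrow> c < N - 1 \<Longrightarrow> Qm N $$ (k, c) = sin (real (Suc k) * th N c)"
  by (simp add: Qm_def)

lemma tri_Q:
  assumes N: "N \<ge> 2" and i: "i < N - 1" and c: "c < N - 1"
  shows "(\<Sum>k = 0..<N - 1. tri \<alpha> \<beta> i k * Qm N $$ (k, c)) = (\<alpha> + 2 * \<beta> * cos (th N c)) * Qm N $$ (i, c)"
proof -
  have "(\<Sum>k = 0..<N - 1. tri \<alpha> \<beta> i k * Qm N $$ (k, c))
      = (\<Sum>k = 0..<N - 1. tri \<alpha> \<beta> i k * sin (real (Suc k) * th N c))"
    using c by (intro sum.cong) (auto simp: Qm_idx)
  also have "\<dots> = (\<alpha> + 2 * \<beta> * cos (th N c)) * sin (real (Suc i) * th N c)"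
    by (rule tri_sum[OF i th_zero]) (use N in simp)
  finally show ?thesis using i c by (simp add: Qm_idx)
qed

lemma mesh_pos: "N \<ge> 2 \<Longrightarrow> mesh_h N > 0" by (simp add: mesh_h_def)

lemma stiff_idx: "i < N - 1 \<Longrightarrow> k < N - 1 \<Longrightarrow> stiff_mat N $$ (i, k) = (1 / mesh_h N) * tri 2 (-1) i k"
  by (simp add: stiff_mat_def tri_def)

lemma mass_idx: "i < N - 1 \<Longrightarrow> k < N - 1 \<Longrightarrow> mass_mat N $$ (i, k) = tri (2/3 * mesh_h N) (1/6 * mesh_h N) i k"
  by (simp add: mass_mat_def tri_def)

lemma hat_tri: "hat_jump N (Suc a) (Suc b) = (1 / mesh_h N) * tri 2 (-1) a b"
  by (auto simp: hat_jump_def tri_def)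

lemma jump_idx:
  assumes "i < N - 1" "k < N - 1"
  shows "jump_mat N $$ (i, k) = (\<Sum>m = 0..<N - 1. mesh_h N * ((1 / mesh_h N) * tri 2 (-1) k m) * ((1 / mesh_h N) * tri 2 (-1) i m))"
proof -
  have "jump_mat N $$ (i, k) = (\<Sum>m = 1..N - 1. mesh_h N * hat_jump N (k + 1) m * hat_jump N (i + 1) m)"
    using assms by (simp add: jump_mat_def)
  also have "\<dots> = (\<Sum>m<N - 1. mesh_h N * hat_jump N (Suc k) (Suc m) * hat_jump N (Suc i) (Suc m))"
    using sum.atLeast1_atMost_eq[of "\<lambda>m. mesh_h N * hat_jump N (Suc k) m * hat_jump N (Suc i) m" "N - 1"]
    by simp
  also have "\<dots> = (\<Sum>m = 0..<N - 1. mesh_h N * ((1 / mesh_h N) * tri 2 (-1) k m) * ((1 / mesh_h N) * tri 2 (-1) i m))"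
    by (simp add: hat_tri lessThan_atLeast0)
  finally show ?thesis .
qed

lemma SK:
  assumes N: "N \<ge> 2" and i: "i < N - 1" and c: "c < N - 1"
  shows "(\<Sum>k = 0..<N - 1. stiff_mat N $$ (i, k) * Qm N $$ (k, c)) = (mu N c / mesh_h N) * Qm N $$ (i, c)"
proof -
  have "(\<Sum>k = 0..<N - 1. stiff_mat N $$ (i, k) * Qm N $$ (k, c))
      = (1 / mesh_h N) * (\<Sum>k = 0..<N - 1. tri 2 (-1) i k * Qm N $$ (k, c))"
    using i by (simp add: sum_distrib_left stiff_idx mult.assoc)
  also have "\<dots> = (mu N c / mesh_h N) * Qm N $$ (i, c)"
    using tri_Q[OF N i c] by (simp add: mu_def)
  finally show ?thesis .
qed

lemma SM:
  assumes N: "N \<ge> 2" and i: "i < N - 1" and c: "c < N - 1"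
  shows "(\<Sum>k = 0..<N - 1. mass_mat N $$ (i, k) * Qm N $$ (k, c)) = (mesh_h N * (1 - mu N c / 6)) * Qm N $$ (i, c)"
proof -
  have "(\<Sum>k = 0..<N - 1. mass_mat N $$ (i, k) * Qm N $$ (k, c))
      = (\<Sum>k = 0..<N - 1. tri (2/3 * mesh_h N) (1/6 * mesh_h N) i k * Qm N $$ (k, c))"
    using i by (intro sum.cong) (auto simp: mass_idx)
  also have "\<dots> = (mesh_h N * (1 - mu N c / 6)) * Qm N $$ (i, c)"
    unfolding tri_Q[OF N i c, of "2/3 * mesh_h N" "1/6 * mesh_h N"] mu_def by (simp add: field_simps)
  finally show ?thesis .
qed

lemma SJ:
  assumes N: "N \<ge> 2" and i: "i < N - 1" and c: "c < N - 1"
  shows "(\<Sum>k = 0..<N - 1. jump_mat N $$ (i, k) * Qm N $$ (k, c)) = ((mu N c)^2 / mesh_h N) * Qm N $$ (i, c)"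
proof -
  define h where "h = mesh_h N"
  have h0: "h > 0" using mesh_pos[OF N] by (simp add: h_def)
  have "(\<Sum>k = 0..<N - 1. jump_mat N $$ (i, k) * Qm N $$ (k, c))
      = (\<Sum>k = 0..<N - 1. \<Sum>m = 0..<N - 1. (1 / h) * tri 2 (-1) i m * (tri 2 (-1) m k * Qm N $$ (k, c)))"
  proof (intro sum.cong refl)
    fix k assume k: "k \<in> {0..<N - 1}"
    have "jump_mat N $$ (i, k) * Qm N $$ (k, c)
        = (\<Sum>m = 0..<N - 1. h * ((1 / h) * tri 2 (-1) k m) * ((1 / h) * tri 2 (-1) i m) * Qm N $$ (k, c))"
      using i k by (simp add: jump_idx h_def sum_distrib_right)
    also have "\<dots> = (\<Sum>m = 0..<N - 1. (1 / h) * tri 2 (-1) i m * (tri 2 (-1) m k * Qm N $$ (k, c)))"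
      using h0 by (intro sum.cong refl) (simp add: tri_sym[of 2 "-1" m k for m] field_simps)
    finally show "jump_mat N $$ (i, k) * Qm N $$ (k, c)
        = (\<Sum>m = 0..<N - 1. (1 / h) * tri 2 (-1) i m * (tri 2 (-1) m k * Qm N $$ (k, c)))" .
  qed
  also have "\<dots> = (\<Sum>m = 0..<N - 1. (1 / h) * tri 2 (-1) i m * (\<Sum>k = 0..<N - 1. tri 2 (-1) m k * Qm N $$ (k, c)))"
    by (subst sum.swap) (simp add: sum_distrib_left)
  also have "\<dots> = (\<Sum>m = 0..<N - 1. (1 / h) * mu N c * (tri 2 (-1) i m * Qm N $$ (m, c)))"
    using tri_Q[OF N _ c] by (intro sum.cong) (auto simp: mu_def)
  also have "\<dots> = (1 / h) * mu N c * (\<Sum>m = 0..<N - 1. tri 2 (-1) i m * Qm N $$ (m, c))"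
    by (simp add: sum_distrib_left)
  also have "\<dots> = ((mu N c)^2 / h) * Qm N $$ (i, c)"
    using tri_Q[OF N i c] by (simp add: mu_def power2_eq_square)
  finally show ?thesis by (simp add: h_def)
qed


lemma dims [simp]:
  "dim_row (stiff_mat N) = N - 1" "dim_col (stiff_mat N) = N - 1"
  "dim_row (mass_mat N) = N - 1" "dim_col (mass_mat N) = N - 1"
  "dim_row (jump_mat N) = N - 1" "dim_col (jump_mat N) = N - 1"
  "dim_row (jump_mat_g N) = N - 1" "dim_col (jump_mat_g N) = N - 1"
  "dim_row (Qm N) = N - 1" "dim_col (Qm N) = N - 1"
  by (simp_all add: stiff_mat_def mass_mat_def jump_mat_def jump_mat_g_def Qm_def)

lemma th_range: assumes "N \<ge> 2" "c < N - 1" shows "0 < th N c" "th N c < pi"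
proof -
  have N0: "real N > 0" using assms by simp
  show "0 < th N c" using N0 by (simp add: th_def)
  have "real (Suc c) < real N" using assms by simp
  then have "real (Suc c) * pi < real N * pi" by simp
  then show "th N c < pi" using N0 by (simp add: th_def divide_less_eq mult.commute)
qed

lemma th_mono: assumes "N \<ge> 2" "c < d" shows "th N c < th N d"
  using assms by (simp add: th_def divide_strict_right_mono)

lemma mu_inj: assumes "N \<ge> 2" "c < N - 1" "d < N - 1" "c \<noteq> d" shows "mu N c \<noteq> mu N d"
proof -
  have "cos (th N c) \<noteq> cos (th N d)"
  proof (cases "c < d")
    case True
    then have "cos (th N d) < cos (th N c)"
      using th_range[OF assms(1,2)] th_range[OF assms(1,3)] th_mono[OF assms(1) True]
      by (intro cos_monotone_0_pi) auto
    then show ?thesis by simp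
  next
    case False
    then have "d < c" using assms by simp
    then have "cos (th N c) < cos (th N d)"
      using th_range[OF assms(1,2)] th_range[OF assms(1,3)] th_mono[OF assms(1)]
      by (intro cos_monotone_0_pi) auto
    then show ?thesis by simp
  qed
  then show ?thesis by (simp add: mu_def)
qed

lemma Q_orth:
  assumes N: "N \<ge> 2" and c: "c < N - 1" and d: "d < N - 1" and cd: "c \<noteq> d"
  shows "(\<Sum>k = 0..<N - 1. Qm N $$ (k, c) * Qm N $$ (k, d)) = 0"
proof -
  define G where "G = (\<Sum>k = 0..<N - 1. Qm N $$ (k, c) * Qm N $$ (k, d))"
  have tq: "(\<Sum>l = 0..<N - 1. tri 2 (-1) k l * Qm N $$ (l, e)) = mu N e * Qm N $$ (k, e)"
    if "k < N - 1" "e < N - 1" for k e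
    using tri_Q[OF N that] by (simp add: mu_def)
  have "mu N c * G = (\<Sum>k = 0..<N - 1. (mu N c * Qm N $$ (k, c)) * Qm N $$ (k, d))"
    by (simp add: G_def sum_distrib_left mult.assoc)
  also have "\<dots> = (\<Sum>k = 0..<N - 1. (\<Sum>l = 0..<N - 1. tri 2 (-1) k l * Qm N $$ (l, c)) * Qm N $$ (k, d))"
  proof (intro sum.cong refl)
    fix k assume "k \<in> {0..<N - 1}"
    then show "mu N c * Qm N $$ (k, c) * Qm N $$ (k, d) = (\<Sum>l = 0..<N - 1. tri 2 (-1) k l * Qm N $$ (l, c)) * Qm N $$ (k, d)"
      using tq[of k c] c by simp
  qed
  also have "\<dots> = (\<Sum>l = 0..<N - 1. Qm N $$ (l, c) * (\<Sum>k = 0..<N - 1. tri 2 (-1) l k * Qm N $$ (k, d)))"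
  proof -
    have "(\<Sum>k = 0..<N - 1. (\<Sum>l = 0..<N - 1. tri 2 (-1) k l * Qm N $$ (l, c)) * Qm N $$ (k, d))
        = (\<Sum>k = 0..<N - 1. \<Sum>l = 0..<N - 1. tri 2 (-1) k l * Qm N $$ (l, c) * Qm N $$ (k, d))"
      by (simp add: sum_distrib_right)
    also have "\<dots> = (\<Sum>l = 0..<N - 1. \<Sum>k = 0..<N - 1. tri 2 (-1) k l * Qm N $$ (l, c) * Qm N $$ (k, d))"
      by (rule sum.swap)
    also have "\<dots> = (\<Sum>l = 0..<N - 1. Qm N $$ (l, c) * (\<Sum>k = 0..<N - 1. tri 2 (-1) l k * Qm N $$ (k, d)))"
      by (simp add: sum_distrib_left tri_sym[of 2 "-1" _ l for l] mult_ac)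
    finally show ?thesis .
  qed
  also have "\<dots> = (\<Sum>l = 0..<N - 1. Qm N $$ (l, c) * (mu N d * Qm N $$ (l, d)))"
  proof (intro sum.cong refl)
    fix l assume "l \<in> {0..<N - 1}"
    then show "Qm N $$ (l, c) * (\<Sum>k = 0..<N - 1. tri 2 (-1) l k * Qm N $$ (k, d)) = Qm N $$ (l, c) * (mu N d * Qm N $$ (l, d))"
      using tq[of l d] d by simp
  qed
  also have "\<dots> = mu N d * G"
    by (simp add: G_def sum_distrib_left mult_ac)
  finally have "(mu N c - mu N d) * G = 0" by (simp add: algebra_simps)
  then show ?thesis using mu_inj[OF N c d cd] by (simp add: G_def)
qed

lemma Q_diag_pos:
  assumes N: "N \<ge> 2" and c: "c < N - 1"
  shows "(\<Sum>k = 0..<N - 1. Qm N $$ (k, c) * Qm N $$ (k, c)) > 0"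
proof -
  have "Qm N $$ (0, c) * Qm N $$ (0, c) \<le> (\<Sum>k = 0..<N - 1. Qm N $$ (k, c) * Qm N $$ (k, c))"
    using c by (intro member_le_sum) auto
  moreover have "Qm N $$ (0, c) = sin (th N c)" using c by (simp add: Qm_def)
  moreover have "sin (th N c) > 0" using th_range[OF N c] by (intro sin_gt_zero) auto
  ultimately show ?thesis by (smt (verit) mult_pos_pos)
qed

lemma det_Q_nz:
  assumes N: "N \<ge> 2"
  shows "det (Qm N) \<noteq> 0"
proof
  assume z: "det (Qm N) = 0"
  define G where "G = transpose_mat (Qm N) * Qm N"
  have Gc: "G \<in> carrier_mat (N - 1) (N - 1)" unfolding G_def by (intro carrier_matI) auto
  have Gidx: "G $$ (c, d) = (\<Sum>k = 0..<N - 1. Qm N $$ (k, c) * Qm N $$ (k, d))"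
    if "c < N - 1" "d < N - 1" for c d
    using that by (simp add: G_def scalar_prod_def)
  have ut: "upper_triangular G"
    unfolding upper_triangular_def
  proof (intro allI impI)
    fix i j assume ij: "i < dim_row G" "j < i"
    then have i: "i < N - 1" and j: "j < N - 1" and ne: "i \<noteq> j" using Gc by auto
    show "G $$ (i, j) = 0" using Gidx[OF i j] Q_orth[OF N i j ne] by simp
  qed
  have "det G = prod_list (diag_mat G)" by (rule det_upper_triangular[OF ut Gc])
  also have "\<dots> = (\<Prod>c = 0..<N - 1. G $$ (c, c))" using Gc by (simp add: prod_list_diag_prod)
  also have "\<dots> > 0"
  proof (intro prod_pos)
    fix c assume "c \<in> {0..<N - 1}"
    then have c: "c < N - 1" by simp
    show "0 < G $$ (c, c)" using Gidx[OF c c] Q_diag_pos[OF N c] by simp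
  qed
  finally have "det G > 0" .
  moreover have "det G = det (transpose_mat (Qm N)) * det (Qm N)"
    unfolding G_def by (rule det_mult) auto
  ultimately show False using z by simp
qed


definition ea :: "nat \<Rightarrow> nat \<Rightarrow> real" where
  "ea N c = mu N c / mesh_h N - 1/12 * ((mu N c)^2 / mesh_h N)"
definition eb :: "nat \<Rightarrow> nat \<Rightarrow> real" where
  "eb N c = mesh_h N * (1 - mu N c / 6) + 1/360 * ((mesh_h N)^2 * ((mu N c)^2 / mesh_h N))"
definition AA :: "nat \<Rightarrow> real mat" where "AA N = stiff_mat N - (1/12) \<cdot>\<^sub>m jump_mat N"
definition BB :: "nat \<Rightarrow> real mat" where "BB N = mass_mat N + (1/360) \<cdot>\<^sub>m jump_mat_g N"

lemma AA_dims [simp]: "dim_row (AA N) = N - 1" "dim_col (AA N) = N - 1"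
  by (simp_all add: AA_def)

lemma AA_idx: "i < N - 1 \<Longrightarrow> k < N - 1 \<Longrightarrow> AA N $$ (i, k) = stiff_mat N $$ (i, k) - 1/12 * jump_mat N $$ (i, k)"
  by (simp add: AA_def)
lemma BB_idx: "i < N - 1 \<Longrightarrow> k < N - 1 \<Longrightarrow> BB N $$ (i, k) = mass_mat N $$ (i, k) + 1/360 * ((mesh_h N)^2 * jump_mat N $$ (i, k))"
  by (simp add: BB_def jump_mat_g_def)

lemma MQ:
  assumes N: "N \<ge> 2" and i: "i < N - 1" and c: "c < N - 1"
  shows "(\<Sum>k = 0..<N - 1. (AA N $$ (i, k) - a * BB N $$ (i, k)) * Qm N $$ (k, c)) = (ea N c - a * eb N c) * Qm N $$ (i, c)"
proof -
  define h where "h = mesh_h N"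
  have "(\<Sum>k = 0..<N - 1. (AA N $$ (i, k) - a * BB N $$ (i, k)) * Qm N $$ (k, c))
     = (\<Sum>k = 0..<N - 1. stiff_mat N $$ (i, k) * Qm N $$ (k, c) - 1/12 * (jump_mat N $$ (i, k) * Qm N $$ (k, c))
          - a * (mass_mat N $$ (i, k) * Qm N $$ (k, c)) - (a * h^2 / 360) * (jump_mat N $$ (i, k) * Qm N $$ (k, c)))"
    using i by (intro sum.cong refl) (auto simp: AA_idx BB_idx h_def algebra_simps)
  also have "\<dots> = (\<Sum>k = 0..<N - 1. stiff_mat N $$ (i, k) * Qm N $$ (k, c))
      - 1/12 * (\<Sum>k = 0..<N - 1. jump_mat N $$ (i, k) * Qm N $$ (k, c))
      - a * (\<Sum>k = 0..<N - 1. mass_mat N $$ (i, k) * Qm N $$ (k, c))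
      - (a * h^2 / 360) * (\<Sum>k = 0..<N - 1. jump_mat N $$ (i, k) * Qm N $$ (k, c))"
    by (simp add: sum_subtractf sum_distrib_left)
  also have "\<dots> = (ea N c - a * eb N c) * Qm N $$ (i, c)"
    unfolding SK[OF N i c] SJ[OF N i c] SM[OF N i c] ea_def eb_def h_def
    by (simp add: algebra_simps)
  finally show ?thesis .
qed

lemma det_Ma:
  assumes N: "N \<ge> 2"
  shows "det (mat (N - 1) (N - 1) (\<lambda>(i, k). AA N $$ (i, k) - a * BB N $$ (i, k)))
       = (\<Prod>c = 0..<N - 1. ea N c - a * eb N c)"
proof -
  define n where "n = N - 1"
  define Ma where "Ma = mat n n (\<lambda>(i, k). AA N $$ (i, k) - a * BB N $$ (i, k))"
  define Dg where "Dg = mat n n (\<lambda>(i, k). if i = k then ea N i - a * eb N i else 0)"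
  have Mc: "Ma \<in> carrier_mat n n" unfolding Ma_def by simp
  have Dc: "Dg \<in> carrier_mat n n" unfolding Dg_def by simp
  have Qc: "Qm N \<in> carrier_mat n n" unfolding Qm_def n_def by simp
  have eq: "Ma * Qm N = Qm N * Dg"
  proof (rule eq_matI)
    fix i c assume "i < dim_row (Qm N * Dg)" "c < dim_col (Qm N * Dg)"
    then have i: "i < N - 1" and c: "c < N - 1" using Dc by (auto simp: n_def)
    have "(Ma * Qm N) $$ (i, c) = (\<Sum>k = 0..<N - 1. (AA N $$ (i, k) - a * BB N $$ (i, k)) * Qm N $$ (k, c))"
      using i c by (simp add: Ma_def n_def scalar_prod_def)
    also have "\<dots> = (ea N c - a * eb N c) * Qm N $$ (i, c)" by (rule MQ[OF N i c])
    also have "\<dots> = (\<Sum>k = 0..<N - 1. if k = c then Qm N $$ (i, k) * (ea N k - a * eb N k) else 0)"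
      using c by (simp add: mult.commute)
    also have "\<dots> = (\<Sum>k = 0..<N - 1. Qm N $$ (i, k) * (if k = c then ea N k - a * eb N k else 0))"
      by (intro sum.cong refl) auto
    also have "\<dots> = (Qm N * Dg) $$ (i, c)"
      using i c by (simp add: Dg_def n_def scalar_prod_def)
    finally show "(Ma * Qm N) $$ (i, c) = (Qm N * Dg) $$ (i, c)" .
  qed (auto simp: Ma_def Dg_def n_def)
  have "det Ma * det (Qm N) = det (Ma * Qm N)" using det_mult[OF Mc Qc] by simp
  also have "\<dots> = det (Qm N * Dg)" by (simp only: eq)
  also have "\<dots> = det (Qm N) * det Dg" using det_mult[OF Qc Dc] .
  finally have "det Ma * det (Qm N) = det (Qm N) * det Dg" .
  then have "det Ma = det Dg" using det_Q_nz[OF N] by (metis mult.commute mult_cancel_left)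
  also have "det Dg = prod_list (diag_mat Dg)"
    by (rule det_upper_triangular[OF _ Dc]) (auto simp: upper_triangular_def Dg_def)
  also have "\<dots> = (\<Prod>c = 0..<N - 1. ea N c - a * eb N c)"
    by (simp add: prod_list_diag_prod Dg_def n_def)
  finally show ?thesis by (simp add: Ma_def n_def)
qed

interpretation evh: comm_ring_hom "\<lambda>p::real poly. poly p a" for a by unfold_locales auto

lemma charpoly:
  assumes N: "N \<ge> 2"
  shows "gen_char_poly (AA N) (BB N) = (\<Prod>c = 0..<N - 1. [:ea N c, - eb N c:])"
proof -
  define P where "P = mat (N - 1) (N - 1) (\<lambda>ij. [:AA N $$ ij, - (BB N $$ ij):])"
  have "poly (det P) a = poly (\<Prod>c = 0..<N - 1. [:ea N c, - eb N c:]) a" for a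
  proof -
    have "map_mat (\<lambda>p. poly p a) P = mat (N - 1) (N - 1) (\<lambda>(i, k). AA N $$ (i, k) - a * BB N $$ (i, k))"
      by (rule eq_matI) (auto simp: P_def)
    then have "poly (det P) a = det (mat (N - 1) (N - 1) (\<lambda>(i, k). AA N $$ (i, k) - a * BB N $$ (i, k)))"
      using evh.hom_det[of a P] by simp
    also have "\<dots> = (\<Prod>c = 0..<N - 1. ea N c - a * eb N c)" by (rule det_Ma[OF N])
    also have "\<dots> = poly (\<Prod>c = 0..<N - 1. [:ea N c, - eb N c:]) a"
      by (simp add: poly_prod)
    finally show ?thesis .
  qed
  then have "det P = (\<Prod>c = 0..<N - 1. [:ea N c, - eb N c:])"
    using poly_eq_poly_eq_iff by blast
  then show ?thesis by (simp add: gen_char_poly_def P_def)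
qed


lemma Df_pos: "0 \<le> m \<Longrightarrow> m \<le> 4 \<Longrightarrow> Df m > 0"
proof -
  assume "0 \<le> m" "m \<le> 4"
  moreover have "0 \<le> m^2/360" by simp
  ultimately show ?thesis unfolding Df_def by linarith
qed

lemma mu_range: "0 \<le> mu N c" "mu N c \<le> 4"
  unfolding mu_def using cos_le_one[of "th N c"] cos_ge_minus_one[of "th N c"] by linarith+

lemma eb_eq: "N \<ge> 2 \<Longrightarrow> eb N c = mesh_h N * Df (mu N c)"
  using mesh_pos[of N] by (simp add: eb_def Df_def power2_eq_square field_simps)

lemma ea_eq: "N \<ge> 2 \<Longrightarrow> ea N c = Nf (mu N c) / mesh_h N"
  using mesh_pos[of N] by (simp add: ea_def Nf_def power2_eq_square field_simps)

lemma eb_pos: "N \<ge> 2 \<Longrightarrow> eb N c > 0"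
  using eb_eq[of N c] mesh_pos[of N] Df_pos[OF mu_range] by simp

lemma ratio_eq: "N \<ge> 2 \<Longrightarrow> ea N c / eb N c = (Nf (mu N c) / Df (mu N c)) / (mesh_h N)^2"
  using mesh_pos[of N] Df_pos[OF mu_range, of N c]
  by (simp add: ea_eq eb_eq power2_eq_square field_simps)

lemma proots_lin: fixes e b :: real assumes "b \<noteq> 0" shows "proots [:e, - b:] = {# e / b #}"
proof -
  define q where "q = e / b"
  have e: "e = b * q" using assms by (simp add: q_def)
  have eq: "[:e, - b:] = smult (- b) [:- q, 1:]" by (simp add: e)
  have "proots [:e, - b:] = proots (smult (- b) [:- q, 1:])" by (simp only: eq)
  also have "\<dots> = proots [:- q, 1:]" using assms by (intro proots_smult) simp
  also have "\<dots> = {# q #}" by simp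
  finally have "proots [:e, - b:] = {# q #}" .
  then show ?thesis by (simp add: q_def)
qed

lemma sum_single_mset: "(\<Sum>c\<in>{0..<n}. {# g c #}) = mset (map g [0..<n])"
  by (induction n) (auto simp: add.commute)

lemma proots_char:
  assumes N: "N \<ge> 2"
  shows "proots (gen_char_poly (AA N) (BB N)) = mset (map (\<lambda>c. ea N c / eb N c) [0..<N - 1])"
proof -
  have nz: "[:ea N c, - eb N c:] \<noteq> 0" for c using eb_pos[OF N, of c] by auto
  have "proots (gen_char_poly (AA N) (BB N)) = (\<Sum>c\<in>{0..<N - 1}. proots [:ea N c, - eb N c:])"
    unfolding charpoly[OF N] by (rule proots_prod) (use nz in auto)
  also have "\<dots> = (\<Sum>c\<in>{0..<N - 1}. {# ea N c / eb N c #})"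
  proof (intro sum.cong refl)
    fix c
    have "eb N c \<noteq> 0" using eb_pos[OF N, of c] by simp
    then show "proots [:ea N c, - eb N c:] = {# ea N c / eb N c #}" by (rule proots_lin)
  qed
  finally show ?thesis by (simp only: sum_single_mset)
qed

lemma NfDf_mono:
  assumes "0 \<le> a" "a < b" "b \<le> 4"
  shows "Nf a / Df a < Nf b / Df b"
proof -
  have id: "Nf b * Df a - Nf a * Df b = (b - a) * (1 - (a + b)/12 + a * b / 90)"
    unfolding Df_def Nf_def power2_eq_square
    by (simp add: field_simps)
  have "0 \<le> a * b / 90" using assms by simp
  moreover have "(a + b)/12 < 2/3" using assms by simp
  ultimately have "0 < 1 - (a + b)/12 + a * b / 90" by linarith
  then have "0 < (b - a) * (1 - (a + b)/12 + a * b / 90)" using assms by simp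
  then have "Nf a * Df b < Nf b * Df a" using id by linarith
  moreover have "Df a > 0" "Df b > 0" using assms Df_pos by auto
  ultimately show ?thesis by (simp add: field_simps)
qed

lemma mu_mono: assumes N: "N \<ge> 2" and cd: "c < d" and d: "d < N - 1" shows "mu N c < mu N d"
proof -
  have c: "c < N - 1" using cd d by simp
  have "cos (th N d) < cos (th N c)"
    using th_range[OF N c] th_range[OF N d] th_mono[OF N cd] by (intro cos_monotone_0_pi) auto
  then show ?thesis by (simp add: mu_def)
qed

lemma ratio_mono: assumes N: "N \<ge> 2" and cd: "c < d" and d: "d < N - 1"
  shows "ea N c / eb N c < ea N d / eb N d"
proof -
  have "Nf (mu N c) / Df (mu N c) < Nf (mu N d) / Df (mu N d)"
    using mu_mono[OF N cd d] mu_range by (intro NfDf_mono) auto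
  moreover have "(mesh_h N)^2 > 0" using mesh_pos[OF N] by simp
  ultimately show ?thesis unfolding ratio_eq[OF N] by (intro divide_strict_right_mono)
qed

lemma gen_eig_val:
  assumes N: "N \<ge> 2" and j: "1 \<le> j" "j \<le> N - 1"
  shows "gen_eig (AA N) (BB N) j = ea N (j - 1) / eb N (j - 1)"
proof -
  define xs where "xs = map (\<lambda>c. ea N c / eb N c) [0..<N - 1]"
  have "sorted xs"
    unfolding sorted_iff_nth_Suc
  proof (intro allI impI)
    fix i assume "Suc i < length xs"
    then have i: "Suc i < N - 1" by (simp add: xs_def)
    show "xs ! i \<le> xs ! Suc i"
      using ratio_mono[OF N _ i, of i] i by (simp add: xs_def nth_append less_imp_le)
  qed
  then have "sorted_list_of_multiset (mset xs) = xs"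
    by (simp only: sorted_list_of_multiset_mset sorted_sort_id)
  then have "sorted_list_of_multiset (proots (gen_char_poly (AA N) (BB N))) = xs"
    unfolding proots_char[OF N] xs_def by simp
  moreover have "j - 1 < N - 1" using j by simp
  ultimately show ?thesis by (simp add: gen_eig_def xs_def)
qed

lemma pi_sq_le: "pi^2 \<le> 10"
proof -
  have "cos (158/100::real) \<le> Cx ((158/100)^2) + ex ((158/100)^2)"
    using cos_taylor[of "158/100"] by (simp add: abs_le_iff)
  also have "\<dots> < 0" by (simp add: Cx_def ex_def power_divide)
  finally have cneg: "cos (158/100::real) < 0" .
  have "pi < 316/100"
  proof (rule ccontr)
    assume "\<not> pi < 316/100"
    then have "158/100 \<le> pi/2" by simp
    then have "0 \<le> cos (158/100::real)" by (intro cos_ge_zero) auto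
    then show False using cneg by simp
  qed
  then have "pi * pi \<le> (316/100) * (316/100)" by (intro mult_mono) auto
  then show ?thesis by (simp add: power2_eq_square)
qed


theorem theorem1:
  fixes N :: nat
  assumes "N \<ge> 2"
  shows "\<forall>j \<in> {1..N - 1}.
    \<bar>gsfem_eig N (1/12) (1/360) j - (real j)\<^sup>2 * pi\<^sup>2\<bar> / ((real j)\<^sup>2 * pi\<^sup>2)
      < (1 / 3024) * (real j * pi * mesh_h N) ^ 6"
proof
  fix j assume jr: "j \<in> {1..N - 1}"
  have N: "N \<ge> 2" using assms .
  define c where "c = j - 1"
  have c: "c < N - 1" and jc: "j = Suc c" using jr by (auto simp: c_def)
  define h where "h = mesh_h N"
  have h0: "h > 0" using mesh_pos[OF N] by (simp add: h_def)
  define t where "t = real j * pi * h"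
  have tth: "th N c = t" by (simp add: th_def t_def h_def mesh_h_def jc)
  have t0: "0 < t" using th_range[OF N c] tth by simp
  have tpi: "t < pi" using th_range[OF N c] tth by simp
  have "t^2 \<le> pi^2" using t0 tpi by (intro power_mono) auto
  then have t10: "t^2 \<le> 10" using pi_sq_le by linarith
  define F where "F = Nf (2 - 2 * cos t) / Df (2 - 2 * cos t)"
  have Fb: "t^2 - t^8/3024 < F" "F < t^2" using est[OF t0 t10] by (simp_all add: F_def)
  have "gsfem_eig N (1/12) (1/360) j = gen_eig (AA N) (BB N) j"
    by (simp add: gsfem_eig_def AA_def BB_def)
  also have "\<dots> = ea N c / eb N c"
    using gen_eig_val[OF N, of j] jr by (simp add: c_def)
  also have "\<dots> = F / h^2"
    unfolding ratio_eq[OF N, of c] mu_def tth F_def h_def ..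
  finally have eig: "gsfem_eig N (1/12) (1/360) j = F / h^2" .
  have ex2: "(real j)\<^sup>2 * pi\<^sup>2 = t^2 / h^2"
    using h0 by (simp add: t_def power_mult_distrib)
  have tp: "t^2 > 0" using t0 by simp
  have "\<bar>F / h^2 - t^2 / h^2\<bar> / (t^2 / h^2) = \<bar>F - t^2\<bar> / t^2"
    using h0 by (simp add: diff_divide_distrib[symmetric] abs_divide)
  also have "\<bar>F - t^2\<bar> = t^2 - F" using Fb by simp
  also have "(t^2 - F) / t^2 < (t^8/3024) / t^2"
    using Fb tp by (intro divide_strict_right_mono) auto
  also have "(t^8/3024) / t^2 = (1/3024) * t^6"
    using tp by (simp add: field_simps eval_nat_numeral)
  finally show "\<bar>gsfem_eig N (1/12) (1/360) j - (real j)\<^sup>2 * pi\<^sup>2\<bar> / ((real j)\<^sup>2 * pi\<^sup>2)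
      < (1 / 3024) * (real j * pi * mesh_h N) ^ 6"
    unfolding eig ex2 by (simp add: t_def h_def)
qed

end
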